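(* Let $x, y \in \mathbb{Z}$, let $S$ be a finite set of functions $f_i(z) = a_i z + b_i$ with $a_i, b_i \in \mathbb{Z}$ and $a_i \ne 0$, let $k \in \mathbb{Z}\setminus\{0\}$ and $g(z) = z + k$, and put $F = S \cup \{g\}$ and $\mathbf{G} = \{ G : G \text{ is an } S\text{-composition with } G(x) \equiv y \pmod k\}$. Then: (A) If $\mathbf{G} = \emptyset$, then $x \not\xrightarrow{F} y$. (B) If some $G \in \mathbf{G}$ satisfies $\operatorname{sgn}(G(x) - y) \ne \operatorname{sgn}(k)$, then $x \xrightarrow{F} y$. (C) If some $G \in \mathbf{G}$, written $G = f_{e_0} \circ \cdots \circ f_{e_K}$ with $f_{e_i} \in S$, has $a_{e_j} < 0$ for some $j$, then $x \xrightarrow{F} y$. (D) If none of the hypotheses of (A), (B), (C) hold, then $x \not\xrightarrow{F} y$.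
   Context: For a set $S$ of affine functions $\mathbb{Z}\to\mathbb{Z}$, an $S$-composition is a finite tuple $(s_1,\dots,s_K)$ with $K \ge 0$ and each $s_i \in S$, identified with the function $s_K \circ \dots \circ s_1$ (the empty tuple being the identity). We write $x \xrightarrow{S} y$ if there exists an $S$-composition $G$ with $G(x) = y$. $\operatorname{sgn}$ denotes the sign function with values in $\{-1,0,1\}$. *)

theory Defs
  imports Main "HOL-Number_Theory.Cong"
begin

text \<open>An S-composition is a list (s_1,...,s_K) of elements of S; it denotes
  s_K o ... o s_1, i.e. s_1 is applied first.\<close>
definition comp_apply :: "(int \<Rightarrow> int) list \<Rightarrow> int \<Rightarrow> int" where
  "comp_apply ss x = foldl (\<lambda>v f. f v) x ss"

definition reaches :: "(int \<Rightarrow> int) set \<Rightarrow> int \<Rightarrow> int \<Rightarrow> bool" where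
  "reaches S x y \<longleftrightarrow> (\<exists>ss \<in> lists S. comp_apply ss x = y)"

definition affine_fun :: "(int \<Rightarrow> int) \<Rightarrow> bool" where
  "affine_fun f \<longleftrightarrow> (\<exists>a b. a \<noteq> 0 \<and> f = (\<lambda>z. a * z + b))"

definition neg_slope :: "(int \<Rightarrow> int) \<Rightarrow> bool" where
  "neg_slope f \<longleftrightarrow> (\<exists>a b. a < 0 \<and> f = (\<lambda>z. a * z + b))"

end

theory Submission
  imports Defs
begin

lemma ca_nil[simp]: "comp_apply [] x = x" by (simp add: comp_apply_def)
lemma ca_snoc[simp]: "comp_apply (xs @ [f]) x = f (comp_apply xs x)" by (simp add: comp_apply_def)
lemma ca_app: "comp_apply (xs @ ys) x = comp_apply ys (comp_apply xs x)" by (simp add: comp_apply_def)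
lemma ca_cons[simp]: "comp_apply (f # xs) x = comp_apply xs (f x)" by (simp add: comp_apply_def)

lemma ca_rep: "comp_apply (replicate n (\<lambda>z. z + k)) v = v + int n * k"
  by (induction n arbitrary: v) (auto simp: algebra_simps)

lemma pos_slope:
  assumes "affine_fun f" "\<not> neg_slope f"
  obtains a b where "a > 0" "f = (\<lambda>z. a * z + b)"
proof -
  from assms(1) obtain a b where "a \<noteq> 0" "f = (\<lambda>z. a * z + b)" unfolding affine_fun_def by blast
  moreover with assms(2) have "\<not> a < 0" unfolding neg_slope_def by blast
  ultimately show ?thesis using that by force
qed

lemma decomp:
  assumes aff: "\<forall>f\<in>S. affine_fun f" and H: "set H \<subseteq> S \<union> {\<lambda>z. z + k}"
  shows "\<exists>c. comp_apply H x = comp_apply (filter (\<lambda>f. f \<in> S) H) x + c * k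
     \<and> ((\<forall>f\<in>set (filter (\<lambda>f. f \<in> S) H). \<not> neg_slope f) \<longrightarrow> c \<ge> 0)"
  using H
proof (induction H rule: rev_induct)
  case Nil
  then show ?case by (intro exI[of _ 0]) simp
next
  case (snoc f H)
  then obtain c where c: "comp_apply H x = comp_apply (filter (\<lambda>f. f \<in> S) H) x + c * k"
    "(\<forall>f\<in>set (filter (\<lambda>f. f \<in> S) H). \<not> neg_slope f) \<longrightarrow> c \<ge> 0" by auto
  show ?case
  proof (cases "f \<in> S")
    case True
    then obtain a b where ab: "a \<noteq> 0" "f = (\<lambda>z. a * z + b)" using aff unfolding affine_fun_def by blast
    show ?thesis
    proof (intro exI[of _ "a * c"] conjI impI)
      show "comp_apply (H @ [f]) x = comp_apply (filter (\<lambda>f. f \<in> S) (H @ [f])) x + a * c * k"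
        using True c(1) ab by (simp add: algebra_simps)
    next
      assume A: "\<forall>f\<in>set (filter (\<lambda>f. f \<in> S) (H @ [f])). \<not> neg_slope f"
      then have "c \<ge> 0" using c(2) by auto
      moreover have "\<not> neg_slope f" using A True by auto
      then have "\<not> a < 0" using ab unfolding neg_slope_def by blast
      ultimately show "0 \<le> a * c" by simp
    qed
  next
    case False
    then have "f = (\<lambda>z. z + k)" using snoc.prems by auto
    then show ?thesis using False c
      by (intro exI[of _ "c + 1"]) (auto simp: algebra_simps)
  qed
qed

lemma pos_comp:
  assumes aff: "\<forall>f\<in>S. affine_fun f" and B: "set B \<subseteq> S" and np: "\<forall>f\<in>set B. \<not> neg_slope f"
  shows "\<exists>p>0. \<forall>v d. comp_apply B (v + d) = comp_apply B v + p * d"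
  using B np
proof (induction B rule: rev_induct)
  case Nil
  then show ?case by (intro exI[of _ 1]) simp
next
  case (snoc h B)
  then obtain p where p: "p > 0" "\<forall>v d. comp_apply B (v + d) = comp_apply B v + p * d" by auto
  have "affine_fun h" "\<not> neg_slope h" using snoc.prems aff by auto
  then obtain a b where ab: "a > 0" "h = (\<lambda>z. a * z + b)" by (rule pos_slope)
  show ?case using p ab
    by (intro exI[of _ "a * p"]) (auto simp: algebra_simps)
qed

lemma reach_from:
  assumes H: "set H \<subseteq> S \<union> {\<lambda>z. z + k}" and m: "comp_apply H x - y = m * k" "m \<le> 0"
  shows "reaches (S \<union> {\<lambda>z. z + k}) x y"
proof -
  let ?H = "H @ replicate (nat (-m)) (\<lambda>z. z + k)"
  have "comp_apply ?H x = y" using m by (simp add: ca_app ca_rep algebra_simps)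
  moreover have "?H \<in> lists (S \<union> {\<lambda>z. z + k})" using H by auto
  ultimately show ?thesis unfolding reaches_def by blast
qed

theorem mainTheorem4:
  fixes x y k :: int and S :: "(int \<Rightarrow> int) set"
  assumes "finite S"
    and "\<forall>f\<in>S. affine_fun f"
    and "k \<noteq> 0"
  defines "g \<equiv> (\<lambda>z. z + k)"
  defines "F \<equiv> S \<union> {g}"
  defines "GG \<equiv> {G \<in> lists S. [comp_apply G x = y] (mod k)}"
  shows "(GG = {} \<longrightarrow> \<not> reaches F x y)
       \<and> ((\<exists>G\<in>GG. sgn (comp_apply G x - y) \<noteq> sgn k) \<longrightarrow> reaches F x y)
       \<and> ((\<exists>G\<in>GG. \<exists>f\<in>set G. neg_slope f) \<longrightarrow> reaches F x y)
       \<and> (\<not> (GG = {}) \<and> \<not> (\<exists>G\<in>GG. sgn (comp_apply G x - y) \<noteq> sgn k)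
            \<and> \<not> (\<exists>G\<in>GG. \<exists>f\<in>set G. neg_slope f) \<longrightarrow> \<not> reaches F x y)"
proof -
  have R: "\<exists>G\<in>GG. \<exists>c. y = comp_apply G x + c * k
     \<and> ((\<forall>f\<in>set G. \<not> neg_slope f) \<longrightarrow> c \<ge> 0)" if "reaches F x y"
  proof -
    from that obtain H where H: "H \<in> lists F" "comp_apply H x = y" unfolding reaches_def by blast
    have "set H \<subseteq> S \<union> {\<lambda>z. z + k}" using H(1) unfolding F_def g_def by auto
    from decomp[OF assms(2) this, of x] H(2) obtain c where
      c: "y = comp_apply (filter (\<lambda>f. f \<in> S) H) x + c * k"
      "(\<forall>f\<in>set (filter (\<lambda>f. f \<in> S) H). \<not> neg_slope f) \<longrightarrow> c \<ge> 0" by auto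
    have "filter (\<lambda>f. f \<in> S) H \<in> GG" unfolding GG_def
      using c(1) by (auto simp: cong_iff_dvd_diff)
    then show ?thesis using c by blast
  qed
  have B: "reaches F x y" if "G \<in> GG" "sgn (comp_apply G x - y) \<noteq> sgn k" for G
  proof -
    from that(1) have G: "G \<in> lists S" "k dvd comp_apply G x - y" unfolding GG_def
      by (auto simp: cong_iff_dvd_diff)
    then obtain m where m: "comp_apply G x - y = m * k" using G(2) by (metis dvdE mult.commute)
    have "m \<le> 0"
    proof (rule ccontr)
      assume "\<not> m \<le> 0"
      then have "sgn (m * k) = sgn k" by (simp add: sgn_mult)
      then show False using that(2) m by simp
    qed
    have "set G \<subseteq> S \<union> {\<lambda>z. z + k}" using G by auto
    from reach_from[OF this m \<open>m \<le> 0\<close>] show ?thesis unfolding F_def g_def .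
  qed
  have C: "reaches F x y" if "G \<in> GG" "\<exists>f\<in>set G. neg_slope f" for G
  proof -
    from that(1) have G: "G \<in> lists S" "k dvd comp_apply G x - y" unfolding GG_def
      by (auto simp: cong_iff_dvd_diff)
    then obtain m where m: "comp_apply G x - y = m * k" using G(2) by (metis dvdE mult.commute)
    from split_list_last_prop[OF that(2)] obtain A f Bs where
      sp: "G = A @ f # Bs" "neg_slope f" "\<forall>z\<in>set Bs. \<not> neg_slope z" by blast
    from sp(2) obtain a b where ab: "a < 0" "f = (\<lambda>z. a * z + b)" unfolding neg_slope_def by blast
    have "set Bs \<subseteq> S" using G(1) sp(1) by auto
    from pos_comp[OF assms(2) this sp(3)] obtain p where
      p: "p > 0" "\<forall>v d. comp_apply Bs (v + d) = comp_apply Bs v + p * d" by blast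
    define t where "t = nat \<bar>m\<bar>"
    define H where "H = A @ replicate t g @ f # Bs"
    have "comp_apply H x = comp_apply Bs (f (comp_apply A x + int t * k))"
      unfolding H_def g_def by (simp add: ca_app ca_rep)
    also have "\<dots> = comp_apply Bs (f (comp_apply A x) + a * int t * k)"
      using ab by (simp add: algebra_simps)
    also have "\<dots> = comp_apply G x + p * a * int t * k"
      using p sp(1) by (simp add: ca_app algebra_simps)
    finally have "comp_apply H x - y = (m + p * a * int t) * k" using m by (simp add: algebra_simps)
    moreover have "m + p * a * int t \<le> 0"
    proof -
      have "p * a \<le> -1" using p(1) ab(1)
        by (smt (verit) mult_pos_neg)
      then have "p * a * int t \<le> - int t" using t_def
        by (metis mult_minus1 mult_right_mono of_nat_0_le_iff)
      then show ?thesis unfolding t_def by simp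
    qed
    moreover have "set H \<subseteq> S \<union> {\<lambda>z. z + k}" using G(1) sp(1) unfolding H_def g_def by auto
    ultimately show ?thesis using reach_from unfolding F_def g_def by blast
  qed
  have D: "\<not> reaches F x y" if "\<not> (\<exists>G\<in>GG. sgn (comp_apply G x - y) \<noteq> sgn k)"
    "\<not> (\<exists>G\<in>GG. \<exists>f\<in>set G. neg_slope f)"
  proof
    assume "reaches F x y"
    from R[OF this] obtain G c where Gc: "G \<in> GG" "y = comp_apply G x + c * k"
      "(\<forall>f\<in>set G. \<not> neg_slope f) \<longrightarrow> c \<ge> 0" by blast
    have "c \<ge> 0" using Gc that(2) by blast
    have "sgn (comp_apply G x - y) = sgn k" using that(1) Gc(1) by blast
    then have "sgn ((-c) * k) = sgn k" using Gc(2) by simp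
    then show False using \<open>c \<ge> 0\<close> assms(3)
      by (cases "c = 0") (auto simp: sgn_mult sgn_if mult_less_0_iff zero_less_mult_iff split: if_splits)
  qed
  show ?thesis using R B C D by blast
qed

end
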